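(* Let $N$ be a self-correcting point process, i.e. a simple point process with $N(-\infty,0]=0$ and intensity $\lambda_t=\lambda(Z_t)$, $Z_t:=t-N_{t-}$, where $\lambda:\mathbb R\to\mathbb R^+$ is continuous and increasing with $0<\lambda^-:=\lim_{z\to-\infty}\lambda(z)<1<\lim_{z\to+\infty}\lambda(z)=:\lambda^+<\infty$. Then $\lim_{t\to\infty}\mathbb{E}[N_t]/t=1$.
   Context: The intensity $\lambda_t$ is the $\mathcal F_t$-predictable intensity of $N$, i.e. $N_t-\int_0^t\lambda_sds$ is a martingale. *)

theory Defs
  imports "HOL-Probability.Probability"
begin

definition left_lim :: "(real \<Rightarrow> real) \<Rightarrow> real \<Rightarrow> real" where
  "left_lim f t = Lim (at_left t) f"

definition simple_counting_path :: "(real \<Rightarrow> real) \<Rightarrow> bool" where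
  "simple_counting_path f \<longleftrightarrow>
     (\<forall>t. f t \<in> \<nat>) \<and> mono f \<and> (\<forall>t. continuous (at_right t) f) \<and>
     (\<forall>t\<le>0. f t = 0) \<and> (\<forall>t. f t - left_lim f t \<le> 1)"

definition filtration_of :: "'a measure \<Rightarrow> (real \<Rightarrow> 'a measure) \<Rightarrow> bool" where
  "filtration_of M F \<longleftrightarrow>
     (\<forall>t. subalgebra M (F t)) \<and> (\<forall>s t. s \<le> t \<longrightarrow> sets (F s) \<subseteq> sets (F t))"

definition martingale_on :: "'a measure \<Rightarrow> (real \<Rightarrow> 'a measure) \<Rightarrow> (real \<Rightarrow> 'a \<Rightarrow> real) \<Rightarrow> bool" where
  "martingale_on M F X \<longleftrightarrow>
     (\<forall>t\<ge>0. integrable M (X t) \<and> X t \<in> borel_measurable (F t)) \<and>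
     (\<forall>s t A. 0 \<le> s \<longrightarrow> s \<le> t \<longrightarrow> A \<in> sets (F s) \<longrightarrow>
        (\<integral>x\<in>A. X t x \<partial>M) = (\<integral>x\<in>A. X s x \<partial>M))"

end

theory Submission
  imports Defs
begin


lemma left_lim_mono:
  fixes f :: "real \<Rightarrow> real" assumes "mono f"
  shows "left_lim f u = Sup (f ` {..<u})"
proof -
  have "(f \<longlongrightarrow> Sup (f ` ({..<u} \<inter> UNIV))) (at u within ({..<u} \<inter> UNIV))"
    by (rule Lim_left_bound[where K="f u"]) (use assms in \<open>auto simp: mono_def\<close>)
  then have "(f \<longlongrightarrow> Sup (f ` {..<u})) (at_left u)" by simp
  then show ?thesis unfolding left_lim_def by (intro tendsto_Lim) auto
qed

lemma left_lim_bounds: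
  fixes f :: "real \<Rightarrow> real" assumes "mono f"
  shows "a < u \<Longrightarrow> f a \<le> left_lim f u" and "left_lim f u \<le> f u"
proof -
  have bdd: "bdd_above (f ` {..<u})" using assms by (auto simp: mono_def intro!: bdd_aboveI2[where M="f u"])
  show "a < u \<Longrightarrow> f a \<le> left_lim f u" unfolding left_lim_mono[OF assms]
    by (rule cSup_upper) (use bdd in auto)
  show "left_lim f u \<le> f u" unfolding left_lim_mono[OF assms]
  proof (rule cSup_least)
    show "f ` {..<u} \<noteq> {}" by auto
    show "\<And>x. x \<in> f ` {..<u} \<Longrightarrow> x \<le> f u" using assms by (auto simp: mono_def)
  qed
qed

lemma left_lim_mono_fun:
  fixes f :: "real \<Rightarrow> real" assumes "mono f"
  shows "mono (left_lim f)"
proof (rule monoI)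
  fix x y :: real assume "x \<le> y"
  show "left_lim f x \<le> left_lim f y"
  proof (cases "x < y")
    case True
    have "left_lim f x \<le> f x" by (rule left_lim_bounds(2)[OF assms])
    also have "\<dots> \<le> left_lim f y" by (rule left_lim_bounds(1)[OF assms True])
    finally show ?thesis .
  next
    case False then show ?thesis using \<open>x \<le> y\<close> by simp
  qed
qed



locale lamctx =
  fixes lam :: "real \<Rightarrow> real" and B :: real
  assumes lam_cont: "continuous_on UNIV lam" and lam_mono: "mono lam"
    and lam_nonneg: "\<And>x. 0 \<le> lam x" and lam_le: "\<And>x. lam x \<le> B"
begin

lemma g_integrable:
  fixes f :: "real \<Rightarrow> real" assumes f: "mono f"
  shows "(\<lambda>u. lam (u - left_lim f u)) integrable_on {a..b}"
proof (rule measurable_bounded_by_integrable_imp_integrable_real[where g="\<lambda>_. B"])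
  have [measurable]: "left_lim f \<in> borel_measurable borel"
    by (rule borel_measurable_mono[OF left_lim_mono_fun[OF f]])
  have [measurable]: "lam \<in> borel_measurable borel" by (rule borel_measurable_continuous_onI[OF lam_cont])
  have X: "(\<lambda>u. lam (u - left_lim f u)) \<in> borel_measurable borel" by measurable
  have "(\<lambda>u. lam (u - left_lim f u)) \<in> borel_measurable lebesgue"
    by (rule measurable_completion) (simp only: measurable_lborel2 X)
  then show "(\<lambda>u. lam (u - left_lim f u)) \<in> borel_measurable (lebesgue_on {a..b})"
    by (intro measurable_restrict_space1)
  show "(\<lambda>_. B) integrable_on {a..b}" by (rule integrable_const_ivl)
  show "\<And>x. x \<in> {a..b} \<Longrightarrow> \<bar>lam (x - left_lim f x)\<bar> \<le> B"
    using lam_nonneg lam_le by (simp add: abs_of_nonneg)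
  show "{a..b} \<in> sets lebesgue" by simp
qed

lemma g_bounds:
  fixes f :: "real \<Rightarrow> real" assumes f: "mono f" and ab: "a \<le> b"
  shows "(b - a) * lam (a - f b) \<le> integral {a..b} (\<lambda>u. lam (u - left_lim f u))"
    and "integral {a..b} (\<lambda>u. lam (u - left_lim f u)) \<le> (b - a) * lam (b - f a)"
    and "0 \<le> integral {a..b} (\<lambda>u. lam (u - left_lim f u))"
    and "integral {a..b} (\<lambda>u. lam (u - left_lim f u)) \<le> (b - a) * B"
proof -
  let ?g = "\<lambda>u. lam (u - left_lim f u)"
  define g' where "g' u = (if u = a then lam (a - f a) else ?g u)" for u
  have eq: "integral {a..b} ?g = integral {a..b} g'"
    by (rule integral_spike[where S="{a}"]) (auto simp: g'_def)
  have gi: "?g integrable_on {a..b}" by (rule g_integrable[OF f])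
  have gi': "g' integrable_on {a..b}"
    by (rule integrable_spike[OF gi, where S="{a}"]) (auto simp: g'_def)
  have c: "Henstock_Kurzweil_Integration.content {a..b} = b - a" using ab by (rule content_real)
  have lo: "lam (a - f b) \<le> g' u" if "u \<in> {a..b}" for u
  proof -
    have "left_lim f u \<le> f u" by (rule left_lim_bounds(2)[OF f])
    moreover have "f u \<le> f b" using that by (intro monoD[OF f]) simp
    ultimately have "lam (a - f b) \<le> lam (u - left_lim f u)" using that by (intro monoD[OF lam_mono]) simp
    moreover have "f a \<le> f b" using ab by (rule monoD[OF f])
    then have "lam (a - f b) \<le> lam (a - f a)" by (intro monoD[OF lam_mono]) simp
    ultimately show ?thesis unfolding g'_def by simp
  qed
  have hi: "g' u \<le> lam (b - f a)" if "u \<in> {a..b}" for u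
  proof (cases "u = a")
    case True
    have "lam (a - f a) \<le> lam (b - f a)" using ab by (intro monoD[OF lam_mono]) simp
    then show ?thesis using True unfolding g'_def by simp
  next
    case False
    then have "a < u" using that by auto
    then have "f a \<le> left_lim f u" by (rule left_lim_bounds(1)[OF f])
    then have "lam (u - left_lim f u) \<le> lam (b - f a)" using that by (intro monoD[OF lam_mono]) simp
    then show ?thesis using False unfolding g'_def by simp
  qed
  have ic: "\<And>C. Henstock_Kurzweil_Integration.integral {a..b} (\<lambda>_. C) = (b - a) * C"
    using c by (simp only: integral_const_real real_scaleR_def)
  have "integral {a..b} (\<lambda>_. lam (a - f b)) \<le> integral {a..b} g'"
    by (rule integral_le[OF integrable_const_ivl gi' lo])
  then show "(b - a) * lam (a - f b) \<le> integral {a..b} ?g" by (simp only: eq ic)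
  have "integral {a..b} g' \<le> integral {a..b} (\<lambda>_. lam (b - f a))"
    by (rule integral_le[OF gi' integrable_const_ivl hi])
  then show "integral {a..b} ?g \<le> (b - a) * lam (b - f a)" by (simp only: eq ic)
  have "integral {a..b} (\<lambda>_. 0) \<le> integral {a..b} ?g"
    by (rule integral_le[OF integrable_const_ivl gi lam_nonneg])
  then show "0 \<le> integral {a..b} ?g" by (simp only: ic mult_zero_right)
  have "integral {a..b} ?g \<le> integral {a..b} (\<lambda>_. B)"
    by (rule integral_le[OF gi integrable_const_ivl lam_le])
  then show "integral {a..b} ?g \<le> (b - a) * B" by (simp only: ic)
qed

lemma g_split:
  fixes f :: "real \<Rightarrow> real" assumes f: "mono f" and "0 \<le> a" "a \<le> b"
  shows "integral {0..b} (\<lambda>u. lam (u - left_lim f u)) - integral {0..a} (\<lambda>u. lam (u - left_lim f u))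
       = integral {a..b} (\<lambda>u. lam (u - left_lim f u))"
  using Henstock_Kurzweil_Integration.integral_combine[OF assms(2,3) g_integrable[OF f, of 0 b]] by simp

end


lemma nat_diff_le1:
  fixes p q :: real assumes "p \<in> \<nat>" "q \<in> \<nat>" "p - q < 2" shows "p - q \<le> 1"
proof -
  obtain n where n: "p = real n" using assms(1) Nats_cases by blast
  obtain k where k: "q = real k" using assms(2) Nats_cases by blast
  have "int n - int k < 2" using assms(3) unfolding n k by linarith
  then have "int n - int k \<le> 1" by linarith
  then show ?thesis unfolding n k by linarith
qed

lemma local_jump:
  fixes f :: "real \<Rightarrow> real" assumes scp: "simple_counting_path f"
  shows "\<exists>r>0. \<forall>y z. dist y x < r \<longrightarrow> dist z x < r \<longrightarrow> y \<le> z \<longrightarrow> f z - f y \<le> 1"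
proof -
  have mono: "mono f" and nat: "\<And>t. f t \<in> \<nat>" and rc: "continuous (at_right x) f"
    and jmp: "f x - left_lim f x \<le> 1"
    using scp unfolding simple_counting_path_def by auto
  define L where "L = left_lim f x"
  have LS: "L = Sup (f ` {..<x})" unfolding L_def by (rule left_lim_mono[OF mono])
  have bdd: "bdd_above (f ` {..<x})"
    by (rule bdd_aboveI2[where M="f x"]) (simp add: monoD[OF mono])
  have "L - 1/2 < Sup (f ` {..<x})" using LS by simp
  from less_cSupD[OF _ this] obtain y0 where y0: "y0 < x" "L - 1/2 < f y0" by auto
  have "(f \<longlongrightarrow> f x) (at_right x)" using rc by (simp add: continuous_within)
  then have "eventually (\<lambda>y. f y < f x + 1/2) (at_right x)"
    by (rule order_tendstoD) simp
  then obtain b where b: "b > x" "\<And>y. y > x \<Longrightarrow> y < b \<Longrightarrow> f y < f x + 1/2"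
    unfolding eventually_at_right[OF less_add_one[of x]] by auto
  have Lx: "L \<le> f x" unfolding L_def by (rule left_lim_bounds(2)[OF mono])
  define r where "r = min (x - y0) (b - x)"
  have "r > 0" using y0 b unfolding r_def by simp
  moreover have "f z - f y \<le> 1" if "dist y x < r" "dist z x < r" "y \<le> z" for y z
  proof -
    have ylow: "f y > L - 1/2"
    proof (cases "y < x")
      case True
      then have "y0 \<le> y" using that(1) unfolding r_def dist_real_def by auto
      then have "f y0 \<le> f y" by (rule monoD[OF mono])
      then show ?thesis using y0 by simp
    next
      case False
      then have "f x \<le> f y" by (intro monoD[OF mono]) simp
      then show ?thesis using Lx by simp
    qed
    have zhigh: "f z < f x + 1/2"
    proof (cases "z \<le> x")
      case True
      then have "f z \<le> f x" by (rule monoD[OF mono])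
      then show ?thesis by simp
    next
      case False
      then have "z < b" using that(2) unfolding r_def dist_real_def by auto
      then show ?thesis using b(2) False by simp
    qed
    have "f z - f y < 2" using ylow zhigh jmp unfolding L_def by simp
    then show ?thesis by (rule nat_diff_le1[OF nat nat])
  qed
  ultimately show ?thesis by blast
qed

lemma mesh:
  fixes f :: "real \<Rightarrow> real" assumes scp: "simple_counting_path f"
  shows "\<exists>m0. \<forall>m\<ge>m0. \<forall>c<m. f (a + real (Suc c) / real m) - f (a + real c / real m) \<le> 1"
proof -
  define P where "P U \<longleftrightarrow> (\<forall>y\<in>U. \<forall>z\<in>U. y \<le> z \<longrightarrow> f z - f y \<le> 1)" for U
  define G where "G = {ball x r | x r. r > 0 \<and> P (ball x r)}"
  have cov: "{a..a+1} \<subseteq> \<Union>G"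
  proof
    fix x assume "x \<in> {a..a+1}"
    obtain r where r: "r > 0" "\<forall>y z. dist y x < r \<longrightarrow> dist z x < r \<longrightarrow> y \<le> z \<longrightarrow> f z - f y \<le> 1"
      using local_jump[OF scp, of x] by blast
    have "P (ball x r)" unfolding P_def using r(2) by (auto simp: dist_commute)
    then have "ball x r \<in> G" using r(1) unfolding G_def by blast
    moreover have "x \<in> ball x r" using r(1) by simp
    ultimately show "x \<in> \<Union>G" by blast
  qed
  have opn: "\<And>g. g \<in> G \<Longrightarrow> open g" unfolding G_def by auto
  obtain e where e: "0 < e" "\<And>x. x \<in> {a..a+1} \<Longrightarrow> \<exists>g\<in>G. ball x e \<subseteq> g"
    using Heine_Borel_lemma[OF compact_Icc cov opn] by blast
  obtain m0 :: nat where m0: "1 / e < real m0" using reals_Archimedean2 by blast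
  have "\<forall>m\<ge>m0. \<forall>c<m. f (a + real (Suc c) / real m) - f (a + real c / real m) \<le> 1"
  proof (intro allI impI)
    fix m c :: nat assume m: "m0 \<le> m" and c: "c < m"
    have mpos: "real m > 0" using c by simp
    have "1 / e < real m" using m0 m by simp
    then have me: "1 / real m < e" using e(1) mpos by (simp add: field_simps)
    define y where "y = a + real c / real m"
    define z where "z = a + real (Suc c) / real m"
    have "real c / real m \<le> 1" using c mpos by simp
    then have yS: "y \<in> {a..a+1}" unfolding y_def using mpos by simp
    have zy: "z = y + 1 / real m" unfolding z_def y_def by (simp add: add_divide_distrib)
    obtain g where g: "g \<in> G" "ball y e \<subseteq> g" using e(2)[OF yS] by blast
    have "y \<in> g" "z \<in> g" using g(2) e(1) me zy by (auto simp: dist_real_def)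
    moreover have "P g" using g(1) unfolding G_def by auto
    moreover have "y \<le> z" using zy mpos by simp
    ultimately have "f z - f y \<le> 1" unfolding P_def by blast
    then show "f (a + real (Suc c) / real m) - f (a + real c / real m) \<le> 1" unfolding y_def z_def .
  qed
  then show ?thesis by blast
qed


locale spc =
  fixes M :: "'a measure" and F :: "real \<Rightarrow> 'a measure"
    and N :: "real \<Rightarrow> 'a \<Rightarrow> real" and lam :: "real \<Rightarrow> real"
    and lam_minus lam_plus :: real
  assumes ps: "prob_space M"
    and filt: "filtration_of M F"
    and paths: "\<forall>\<omega>\<in>space M. simple_counting_path (\<lambda>t. N t \<omega>)"
    and adapted: "\<forall>t. N t \<in> borel_measurable (F t)"
    and cont: "continuous_on UNIV lam" and lmono: "mono lam"
    and lbot: "(lam \<longlongrightarrow> lam_minus) at_bot" and ltop: "(lam \<longlongrightarrow> lam_plus) at_top"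
    and lm_pos: "0 < lam_minus" and lm1: "lam_minus < 1" and lp1: "1 < lam_plus"
    and mart: "martingale_on M F
           (\<lambda>t \<omega>. N t \<omega> - integral {0..t} (\<lambda>s. lam (s - left_lim (\<lambda>u. N u \<omega>) s)))"
begin

definition I :: "real \<Rightarrow> 'a \<Rightarrow> real" where
  "I t \<omega> = integral {0..t} (\<lambda>s. lam (s - left_lim (\<lambda>u. N u \<omega>) s))"
definition J :: "real \<Rightarrow> real \<Rightarrow> 'a \<Rightarrow> real" where
  "J s t \<omega> = I t \<omega> - I s \<omega>"

lemma lam_ge: "lam_minus \<le> lam x"
proof (rule tendsto_le[OF trivial_limit_at_bot_linorder tendsto_const lbot])
  show "\<forall>\<^sub>F y in at_bot. lam y \<le> lam x"
    unfolding eventually_at_bot_linorder by (intro exI[of _ x] allI impI monoD[OF lmono])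
qed

lemma lam_le: "lam x \<le> lam_plus"
proof (rule tendsto_le[OF trivial_limit_at_top_linorder ltop tendsto_const])
  show "\<forall>\<^sub>F y in at_top. lam x \<le> lam y"
    unfolding eventually_at_top_linorder by (intro exI[of _ x] allI impI monoD[OF lmono])
qed

lemma lam_nonneg: "0 \<le> lam x" using lam_ge[of x] lm_pos by simp

sublocale lamctx lam lam_plus
  by unfold_locales (use cont lmono lam_nonneg lam_le in auto)

lemma path: "\<omega> \<in> space M \<Longrightarrow> simple_counting_path (\<lambda>t. N t \<omega>)" using paths by auto

lemma pmono: "\<omega> \<in> space M \<Longrightarrow> mono (\<lambda>t. N t \<omega>)"
  using path unfolding simple_counting_path_def by blast

lemma pmonoD: "\<omega> \<in> space M \<Longrightarrow> s \<le> t \<Longrightarrow> N s \<omega> \<le> N t \<omega>"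
  using monoD[OF pmono] by blast

lemma pnat: "\<omega> \<in> space M \<Longrightarrow> N t \<omega> \<in> \<nat>"
  using path unfolding simple_counting_path_def by blast

lemma pzero: "\<omega> \<in> space M \<Longrightarrow> t \<le> 0 \<Longrightarrow> N t \<omega> = 0"
  using path unfolding simple_counting_path_def by blast

lemma pnonneg: "\<omega> \<in> space M \<Longrightarrow> 0 \<le> N t \<omega>"
  using pnat[of \<omega> t] by (auto elim!: Nats_cases)

lemma subalg: "subalgebra M (F t)" using filt unfolding filtration_of_def by blast

lemma filt_mono: "s \<le> t \<Longrightarrow> sets (F s) \<subseteq> sets (F t)" using filt unfolding filtration_of_def by blast

lemma space_F: "space (F t) = space M" using subalg unfolding subalgebra_def by blast

lemma sets_F: "A \<in> sets (F t) \<Longrightarrow> A \<in> sets M" using subalg unfolding subalgebra_def by blast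

lemma meas_F: "f \<in> borel_measurable (F t) \<Longrightarrow> f \<in> borel_measurable M"
  by (rule measurable_from_subalg[OF subalg])

lemma meas_FF: "s \<le> t \<Longrightarrow> f \<in> borel_measurable (F s) \<Longrightarrow> f \<in> borel_measurable (F t)"
proof -
  assume "s \<le> t" "f \<in> borel_measurable (F s)"
  have "subalgebra (F t) (F s)" unfolding subalgebra_def using space_F filt_mono[OF \<open>s \<le> t\<close>] by simp
  then show ?thesis using measurable_from_subalg \<open>f \<in> borel_measurable (F s)\<close> by blast
qed

lemma N_F: "N t \<in> borel_measurable (F t)" using adapted by blast
lemma N_meas[measurable]: "N t \<in> borel_measurable M" using meas_F[OF N_F] .
lemma N_FF: "s \<le> t \<Longrightarrow> N s \<in> borel_measurable (F t)" using meas_FF N_F by blast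

lemma X_int: "0 \<le> t \<Longrightarrow> integrable M (\<lambda>\<omega>. N t \<omega> - I t \<omega>)"
  using mart unfolding martingale_on_def I_def by blast
lemma X_F: "0 \<le> t \<Longrightarrow> (\<lambda>\<omega>. N t \<omega> - I t \<omega>) \<in> borel_measurable (F t)"
  using mart unfolding martingale_on_def I_def by blast

lemma I_meas[measurable]: "0 \<le> t \<Longrightarrow> I t \<in> borel_measurable M"
proof -
  assume t: "0 \<le> t"
  have "(\<lambda>\<omega>. N t \<omega> - (N t \<omega> - I t \<omega>)) \<in> borel_measurable M"
    using meas_F[OF X_F[OF t]] N_meas by measurable
  then show ?thesis by simp
qed

lemma J_eq: "\<omega> \<in> space M \<Longrightarrow> 0 \<le> s \<Longrightarrow> s \<le> t \<Longrightarrow>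
   J s t \<omega> = integral {s..t} (\<lambda>u. lam (u - left_lim (\<lambda>v. N v \<omega>) u))"
  unfolding J_def I_def by (rule g_split[OF pmono])

lemma J_bounds:
  assumes "\<omega> \<in> space M" "0 \<le> s" "s \<le> t"
  shows "(t - s) * lam (s - N t \<omega>) \<le> J s t \<omega>" "J s t \<omega> \<le> (t - s) * lam (t - N s \<omega>)"
    "0 \<le> J s t \<omega>" "J s t \<omega> \<le> (t - s) * lam_plus"
  using g_bounds[OF pmono[OF assms(1)] assms(3)] J_eq[OF assms] by simp_all

lemma I_bounds: "\<omega> \<in> space M \<Longrightarrow> 0 \<le> t \<Longrightarrow> 0 \<le> I t \<omega> \<and> I t \<omega> \<le> t * lam_plus"
  using J_bounds(3,4)[of \<omega> 0 t] unfolding J_def I_def by simp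

lemma J_meas[measurable]: "0 \<le> s \<Longrightarrow> s \<le> t \<Longrightarrow> J s t \<in> borel_measurable M"
  unfolding J_def using I_meas by measurable

lemma I_int: "0 \<le> t \<Longrightarrow> integrable M (I t)"
proof -
  assume t: "0 \<le> t"
  interpret prob_space M by (rule ps)
  show ?thesis
  proof (rule integrable_const_bound[where B="t * lam_plus"])
    show "AE x in M. norm (I t x) \<le> t * lam_plus"
      using I_bounds[OF _ t] by (intro AE_I2) simp
  qed (use I_meas[OF t] in simp)
qed

lemma J_int: "0 \<le> s \<Longrightarrow> s \<le> t \<Longrightarrow> integrable M (J s t)"
  unfolding J_def using I_int by (intro Bochner_Integration.integrable_diff) auto

lemma N_int: "0 \<le> t \<Longrightarrow> integrable M (N t)"
proof -
  assume t: "0 \<le> t"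
  have "integrable M (\<lambda>\<omega>. (N t \<omega> - I t \<omega>) + I t \<omega>)"
    using X_int[OF t] I_int[OF t] by (intro Bochner_Integration.integrable_add)
  then show ?thesis by simp
qed

lemma incr_ident:
  assumes st: "0 \<le> s" "s \<le> t" and A: "A \<in> sets (F s)"
  shows "(\<integral>\<omega>\<in>A. (N t \<omega> - N s \<omega>) \<partial>M) = (\<integral>\<omega>\<in>A. J s t \<omega> \<partial>M)"
proof -
  have AM: "A \<in> sets M" by (rule sets_F[OF A])
  have eq: "(\<integral>x\<in>A. (N t x - I t x) \<partial>M) = (\<integral>x\<in>A. (N s x - I s x) \<partial>M)"
    using mart st A unfolding martingale_on_def I_def by blast
  have si: "set_integrable M A f" if "integrable M f" for f :: "'a \<Rightarrow> real"
    unfolding set_integrable_def using that AM by (intro integrable_mult_indicator)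
  have "(\<integral>\<omega>\<in>A. (N t \<omega> - N s \<omega>) \<partial>M) - (\<integral>\<omega>\<in>A. J s t \<omega> \<partial>M)
        = (\<integral>\<omega>\<in>A. (N t \<omega> - N s \<omega>) - J s t \<omega> \<partial>M)"
    using si N_int J_int st by (intro set_integral_diff(2)[symmetric] si Bochner_Integration.integrable_diff) auto
  also have "\<dots> = (\<integral>\<omega>\<in>A. (N t \<omega> - I t \<omega>) - (N s \<omega> - I s \<omega>) \<partial>M)"
    unfolding J_def by (simp add: algebra_simps)
  also have "\<dots> = 0"
    using eq si X_int st by (subst set_integral_diff(2)) auto
  finally show ?thesis by simp
qed

end

context spc begin

lemma set_nn:
  assumes A: "A \<in> sets M" and h: "integrable M h" and hp: "\<And>x. x \<in> space M \<Longrightarrow> 0 \<le> h x"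
  shows "(\<integral>\<^sup>+\<omega>. indicator A \<omega> * ennreal (h \<omega>) \<partial>M) = ennreal (\<integral>\<omega>\<in>A. h \<omega> \<partial>M)"
proof -
  have "(\<integral>\<^sup>+\<omega>. indicator A \<omega> * ennreal (h \<omega>) \<partial>M) = (\<integral>\<^sup>+\<omega>. ennreal (indicator A \<omega> *\<^sub>R h \<omega>) \<partial>M)"
    by (intro nn_integral_cong) (simp split: split_indicator)
  also have "\<dots> = ennreal (\<integral>\<omega>. indicator A \<omega> *\<^sub>R h \<omega> \<partial>M)"
    using A h hp by (intro nn_integral_eq_integral integrable_mult_indicator AE_I2) (auto split: split_indicator)
  finally show ?thesis unfolding set_lebesgue_integral_def .
qed

lemma nn_ident:
  assumes st: "0 \<le> s" "s \<le> t" and u: "u \<in> borel_measurable (F s)"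
  shows "(\<integral>\<^sup>+\<omega>. u \<omega> * ennreal (N t \<omega> - N s \<omega>) \<partial>M) = (\<integral>\<^sup>+\<omega>. u \<omega> * ennreal (J s t \<omega>) \<partial>M)"
  using u
proof (induction rule: borel_measurable_induct)
  case (cong f g)
  then show ?case using space_F by (metis (no_types, lifting) nn_integral_cong)
next
  case (set A)
  have AM: "A \<in> sets M" by (rule sets_F[OF set])
  have "(\<integral>\<^sup>+\<omega>. indicator A \<omega> * ennreal (N t \<omega> - N s \<omega>) \<partial>M) = ennreal (\<integral>\<omega>\<in>A. (N t \<omega> - N s \<omega>) \<partial>M)"
    using st N_int pmonoD by (intro set_nn AM Bochner_Integration.integrable_diff) auto
  also have "\<dots> = ennreal (\<integral>\<omega>\<in>A. J s t \<omega> \<partial>M)" using incr_ident[OF st set] by simp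
  also have "\<dots> = (\<integral>\<^sup>+\<omega>. indicator A \<omega> * ennreal (J s t \<omega>) \<partial>M)"
    using st J_int J_bounds(3) by (intro set_nn[symmetric] AM) auto
  finally show ?case .
next
  case (mult u c)
  have um: "u \<in> borel_measurable M" using meas_F mult by blast
  have "(\<integral>\<^sup>+\<omega>. c * u \<omega> * ennreal (N t \<omega> - N s \<omega>) \<partial>M) = c * (\<integral>\<^sup>+\<omega>. u \<omega> * ennreal (N t \<omega> - N s \<omega>) \<partial>M)"
    using um by (simp add: mult.assoc nn_integral_cmult)
  also have "\<dots> = c * (\<integral>\<^sup>+\<omega>. u \<omega> * ennreal (J s t \<omega>) \<partial>M)" using mult by simp
  also have "\<dots> = (\<integral>\<^sup>+\<omega>. c * u \<omega> * ennreal (J s t \<omega>) \<partial>M)"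
    using um st by (simp add: mult.assoc nn_integral_cmult)
  finally show ?case .
next
  case (add u v)
  have um: "u \<in> borel_measurable M" "v \<in> borel_measurable M" using meas_F add by blast+
  have "(\<integral>\<^sup>+\<omega>. (v \<omega> + u \<omega>) * ennreal (N t \<omega> - N s \<omega>) \<partial>M)
     = (\<integral>\<^sup>+\<omega>. v \<omega> * ennreal (N t \<omega> - N s \<omega>) \<partial>M) + (\<integral>\<^sup>+\<omega>. u \<omega> * ennreal (N t \<omega> - N s \<omega>) \<partial>M)"
    using um by (simp add: distrib_right nn_integral_add)
  also have "\<dots> = (\<integral>\<^sup>+\<omega>. v \<omega> * ennreal (J s t \<omega>) \<partial>M) + (\<integral>\<^sup>+\<omega>. u \<omega> * ennreal (J s t \<omega>) \<partial>M)"
    using add by simp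
  also have "\<dots> = (\<integral>\<^sup>+\<omega>. (v \<omega> + u \<omega>) * ennreal (J s t \<omega>) \<partial>M)"
    using um st by (simp add: distrib_right nn_integral_add)
  finally show ?case .
next
  case (seq U)
  have um: "\<And>i. U i \<in> borel_measurable M" using meas_F seq by blast
  have inc1: "incseq (\<lambda>i \<omega>. U i \<omega> * ennreal (N t \<omega> - N s \<omega>))"
    using seq by (auto simp: incseq_def le_fun_def intro!: mult_right_mono)
  have inc2: "incseq (\<lambda>i \<omega>. U i \<omega> * ennreal (J s t \<omega>))"
    using seq by (auto simp: incseq_def le_fun_def intro!: mult_right_mono)
  have "(\<integral>\<^sup>+\<omega>. (SUP i. U i) \<omega> * ennreal (N t \<omega> - N s \<omega>) \<partial>M)
      = (\<integral>\<^sup>+\<omega>. (SUP i. U i \<omega> * ennreal (N t \<omega> - N s \<omega>)) \<partial>M)"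
    by (simp add: SUP_mult_right_ennreal image_image)
  also have "\<dots> = (SUP i. \<integral>\<^sup>+\<omega>. U i \<omega> * ennreal (N t \<omega> - N s \<omega>) \<partial>M)"
    using um by (intro nn_integral_monotone_convergence_SUP[OF inc1]) simp
  also have "\<dots> = (SUP i. \<integral>\<^sup>+\<omega>. U i \<omega> * ennreal (J s t \<omega>) \<partial>M)"
    using seq.IH by simp
  also have "\<dots> = (\<integral>\<^sup>+\<omega>. (SUP i. U i \<omega> * ennreal (J s t \<omega>)) \<partial>M)"
    using um st by (intro nn_integral_monotone_convergence_SUP[OF inc2, symmetric]) simp
  also have "\<dots> = (\<integral>\<^sup>+\<omega>. (SUP i. U i) \<omega> * ennreal (J s t \<omega>) \<partial>M)"
    by (simp add: SUP_mult_right_ennreal image_image)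
  finally show ?case .
qed

lemma real_ident:
  assumes st: "0 \<le> s" "s \<le> t" and Xm: "X \<in> borel_measurable (F s)"
    and Xp: "\<And>\<omega>. \<omega> \<in> space M \<Longrightarrow> 0 \<le> X \<omega>" and Xi: "integrable M X"
  shows "integrable M (\<lambda>\<omega>. X \<omega> * (N t \<omega> - N s \<omega>))" "integrable M (\<lambda>\<omega>. X \<omega> * J s t \<omega>)"
    "(\<integral>\<omega>. X \<omega> * (N t \<omega> - N s \<omega>) \<partial>M) = (\<integral>\<omega>. X \<omega> * J s t \<omega> \<partial>M)"
proof -
  have XM[measurable]: "X \<in> borel_measurable M" using meas_F[OF Xm] .
  have Jm[measurable]: "J s t \<in> borel_measurable M" using J_meas[OF st] .
  have e: "(\<integral>\<^sup>+\<omega>. ennreal (X \<omega> * (N t \<omega> - N s \<omega>)) \<partial>M) = (\<integral>\<^sup>+\<omega>. ennreal (X \<omega> * J s t \<omega>) \<partial>M)"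
  proof -
    have "(\<integral>\<^sup>+\<omega>. ennreal (X \<omega> * (N t \<omega> - N s \<omega>)) \<partial>M) = (\<integral>\<^sup>+\<omega>. ennreal (X \<omega>) * ennreal (N t \<omega> - N s \<omega>) \<partial>M)"
      using Xp pmonoD st by (intro nn_integral_cong) (simp add: ennreal_mult)
    also have "\<dots> = (\<integral>\<^sup>+\<omega>. ennreal (X \<omega>) * ennreal (J s t \<omega>) \<partial>M)"
      by (intro nn_ident[OF st] measurable_compose[OF Xm measurable_ennreal])
    also have "\<dots> = (\<integral>\<^sup>+\<omega>. ennreal (X \<omega> * J s t \<omega>) \<partial>M)"
      using Xp J_bounds(3)[OF _ st] by (intro nn_integral_cong) (simp add: ennreal_mult)
    finally show ?thesis .
  qed
  have ij: "integrable M (\<lambda>\<omega>. X \<omega> * J s t \<omega>)"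
  proof (rule Bochner_Integration.integrable_bound[where f="\<lambda>\<omega>. X \<omega> * ((t - s) * lam_plus)"])
    show "integrable M (\<lambda>\<omega>. X \<omega> * ((t - s) * lam_plus))" using Xi by simp
    show "AE x in M. norm (X x * J s t x) \<le> norm (X x * ((t - s) * lam_plus))"
    proof (intro AE_I2)
      fix x assume x: "x \<in> space M"
      have "0 \<le> J s t x" "J s t x \<le> (t - s) * lam_plus" using J_bounds[OF x st] by auto
      then show "norm (X x * J s t x) \<le> norm (X x * ((t - s) * lam_plus))"
        using Xp[OF x] st lp1 by (simp add: abs_mult mult_left_mono)
    qed
  qed measurable
  show "integrable M (\<lambda>\<omega>. X \<omega> * J s t \<omega>)" by (rule ij)
  have nnJ: "(\<integral>\<^sup>+\<omega>. ennreal (X \<omega> * J s t \<omega>) \<partial>M) = ennreal (\<integral>\<omega>. X \<omega> * J s t \<omega> \<partial>M)"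
    using ij Xp J_bounds(3)[OF _ st] by (intro nn_integral_eq_integral AE_I2) auto
  show iN: "integrable M (\<lambda>\<omega>. X \<omega> * (N t \<omega> - N s \<omega>))"
    using e nnJ Xp pmonoD st by (intro integrableI_nn_integral_finite AE_I2) auto
  have "(\<integral>\<^sup>+\<omega>. ennreal (X \<omega> * (N t \<omega> - N s \<omega>)) \<partial>M) = ennreal (\<integral>\<omega>. X \<omega> * (N t \<omega> - N s \<omega>) \<partial>M)"
    using iN Xp pmonoD st by (intro nn_integral_eq_integral AE_I2) auto
  then have "ennreal (\<integral>\<omega>. X \<omega> * (N t \<omega> - N s \<omega>) \<partial>M) = ennreal (\<integral>\<omega>. X \<omega> * J s t \<omega> \<partial>M)"
    using e nnJ by simp
  moreover have "0 \<le> (\<integral>\<omega>. X \<omega> * (N t \<omega> - N s \<omega>) \<partial>M)"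
    using Xp pmonoD st by (intro integral_nonneg_AE AE_I2) auto
  moreover have "0 \<le> (\<integral>\<omega>. X \<omega> * J s t \<omega> \<partial>M)"
    using Xp J_bounds(3)[OF _ st] by (intro integral_nonneg_AE AE_I2) auto
  ultimately show "(\<integral>\<omega>. X \<omega> * (N t \<omega> - N s \<omega>) \<partial>M) = (\<integral>\<omega>. X \<omega> * J s t \<omega> \<partial>M)"
    by simp
qed

end


lemma tele:
  fixes h :: "nat \<Rightarrow> real"
  shows "(h m - h 0) * (h m - h 0 - 1) = (\<Sum>c<m. (h (Suc c) - h c) * (h (Suc c) - h c - 1))
     + 2 * (\<Sum>c<m. (h c - h 0) * (h (Suc c) - h c))"
proof (induction m)
  case 0 then show ?case by simp
next
  case (Suc m)
  have "(h (Suc m) - h 0) * (h (Suc m) - h 0 - 1) = (h m - h 0) * (h m - h 0 - 1)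
     + (h (Suc m) - h m) * (h (Suc m) - h m - 1) + 2 * ((h m - h 0) * (h (Suc m) - h m))"
    by (simp add: algebra_simps)
  then show ?case using Suc by (simp add: algebra_simps)
qed

lemma int01: fixes d :: real assumes "d \<in> \<int>" "0 \<le> d" "d \<le> 1" shows "d * (d - 1) = 0"
proof -
  obtain n where n: "d = of_int n" using assms(1) Ints_cases by blast
  have "n = 0 \<or> n = 1" using assms(2,3) unfolding n by linarith
  then show ?thesis unfolding n by auto
qed

context spc begin

lemma pint: "\<omega> \<in> space M \<Longrightarrow> N t \<omega> - N s \<omega> \<in> \<int>"
  using pnat[of \<omega> t] pnat[of \<omega> s] by (intro Ints_diff) (auto intro: Nats_subset_Ints[THEN subsetD])

lemma incr_int:
  assumes st: "0 \<le> s" "s \<le> t"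
  shows "(\<integral>\<omega>. N t \<omega> - N s \<omega> \<partial>M) \<le> (t - s) * lam_plus"
proof -
  interpret prob_space M by (rule ps)
  have "(\<integral>\<omega>. 1 * (N t \<omega> - N s \<omega>) \<partial>M) = (\<integral>\<omega>. 1 * J s t \<omega> \<partial>M)"
    by (rule real_ident(3)[OF st]) auto
  also have "\<dots> \<le> (\<integral>\<omega>. (t - s) * lam_plus \<partial>M)"
    using J_int[OF st] J_bounds(4)[OF _ st] by (intro integral_mono) auto
  finally show ?thesis using prob_space by simp
qed

lemma fact2:
  assumes s: "0 \<le> s"
  shows "integrable M (\<lambda>\<omega>. (N (s+1) \<omega> - N s \<omega>) * (N (s+1) \<omega> - N s \<omega> - 1))"
    "(\<integral>\<omega>. (N (s+1) \<omega> - N s \<omega>) * (N (s+1) \<omega> - N s \<omega> - 1) \<partial>M) \<le> 2 * lam_plus^2"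
proof -
  interpret prob_space M by (rule ps)
  define kk where "kk \<omega> = (N (s+1) \<omega> - N s \<omega>) * (N (s+1) \<omega> - N s \<omega> - 1)" for \<omega>
  define tt where "tt m c = s + real c / real m" for m c :: nat
  define U where "U m \<omega> = 2 * (\<Sum>c<m. (N (tt m c) \<omega> - N s \<omega>) * (N (tt m (Suc c)) \<omega> - N (tt m c) \<omega>))" for m \<omega>
  have tt0: "tt m 0 = s" for m unfolding tt_def by simp
  have ttm: "m > 0 \<Longrightarrow> tt m m = s + 1" for m unfolding tt_def by simp
  have ttge: "s \<le> tt m c" for m c unfolding tt_def using s by simp
  have ttle: "tt m c \<le> tt m (Suc c)" for m c unfolding tt_def by (simp add: divide_right_mono)
  have ttd: "m > 0 \<Longrightarrow> tt m (Suc c) - tt m c = 1 / real m" for m c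
    unfolding tt_def by (simp add: add_divide_distrib)
  have ttc: "c < m \<Longrightarrow> tt m c - s \<le> 1" for m c unfolding tt_def by simp
  have kknn: "0 \<le> kk \<omega>" if w: "\<omega> \<in> space M" for \<omega>
  proof -
    obtain n where "N (s+1) \<omega> - N s \<omega> = of_int n" using pint[OF w, of "s+1" s] by (auto elim: Ints_cases)
    moreover have "0 \<le> N (s+1) \<omega> - N s \<omega>" using pmonoD[OF w, of s "s+1"] by simp
    ultimately have n0: "0 \<le> n" by simp
    show ?thesis
    proof (cases "n = 0")
      case True then show ?thesis unfolding kk_def using \<open>N (s+1) \<omega> - N s \<omega> = of_int n\<close> by simp
    next
      case False
      then have "1 \<le> N (s+1) \<omega> - N s \<omega>" using n0 \<open>N (s+1) \<omega> - N s \<omega> = of_int n\<close> by simp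
      then show ?thesis unfolding kk_def by simp
    qed
  qed
  have [measurable]: "kk \<in> borel_measurable M" unfolding kk_def by measurable
  have Um[measurable]: "U m \<in> borel_measurable M" for m unfolding U_def by measurable
  have Unn: "0 \<le> U m \<omega>" if "\<omega> \<in> space M" for m \<omega>
    unfolding U_def using that pmonoD[OF that] ttge ttle
    by (intro mult_nonneg_nonneg sum_nonneg) auto
  have ev: "eventually (\<lambda>m. U m \<omega> = kk \<omega>) sequentially" if w: "\<omega> \<in> space M" for \<omega>
  proof -
    obtain m0 where m0: "\<forall>m\<ge>m0. \<forall>c<m. N (s + real (Suc c) / real m) \<omega> - N (s + real c / real m) \<omega> \<le> 1"
      using mesh[OF path[OF w], of s] by blast
    have "U m \<omega> = kk \<omega>" if m: "m \<ge> max m0 1" for m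
    proof -
      define h where "h c = N (tt m c) \<omega>" for c
      have z: "(h (Suc c) - h c) * (h (Suc c) - h c - 1) = 0" if "c < m" for c
      proof -
        have "m0 \<le> m" using m by simp
        then have d1: "N (tt m (Suc c)) \<omega> - N (tt m c) \<omega> \<le> 1" using m0 that unfolding tt_def by blast
        have d0: "0 \<le> N (tt m (Suc c)) \<omega> - N (tt m c) \<omega>" using pmonoD[OF w ttle] by simp
        show ?thesis unfolding h_def by (rule int01[OF pint[OF w] d0 d1])
      qed
      have "kk \<omega> = (h m - h 0) * (h m - h 0 - 1)"
        unfolding kk_def h_def using m by (simp add: tt0 ttm)
      also have "\<dots> = 2 * (\<Sum>c<m. (h c - h 0) * (h (Suc c) - h c))"
      proof -
        have "(\<Sum>c<m. (h (Suc c) - h c) * (h (Suc c) - h c - 1)) = 0" using z by (intro sum.neutral) simp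
        then show ?thesis using tele[of h m] by simp
      qed
      also have "\<dots> = U m \<omega>" unfolding U_def h_def tt0 ..
      finally show ?thesis by simp
    qed
    then show ?thesis unfolding eventually_sequentially by blast
  qed
  have Ubd: "integrable M (U m) \<and> (\<integral>\<omega>. U m \<omega> \<partial>M) \<le> 2 * lam_plus^2" if mp: "m > 0" for m
  proof -
    have trm: "integrable M (\<lambda>\<omega>. (N (tt m c) \<omega> - N s \<omega>) * (N (tt m (Suc c)) \<omega> - N (tt m c) \<omega>))
       \<and> (\<integral>\<omega>. (N (tt m c) \<omega> - N s \<omega>) * (N (tt m (Suc c)) \<omega> - N (tt m c) \<omega>) \<partial>M) \<le> lam_plus^2 / real m"
      if c: "c < m" for c
    proof -
      have s0: "0 \<le> tt m c" using ttge s by (meson order_trans)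
      have Xm: "(\<lambda>\<omega>. N (tt m c) \<omega> - N s \<omega>) \<in> borel_measurable (F (tt m c))"
        using N_F N_FF[OF ttge] by measurable
      have Xp: "\<And>\<omega>. \<omega> \<in> space M \<Longrightarrow> 0 \<le> N (tt m c) \<omega> - N s \<omega>" using pmonoD ttge by auto
      have Xi: "integrable M (\<lambda>\<omega>. N (tt m c) \<omega> - N s \<omega>)" using N_int s s0 by auto
      note R = real_ident[OF s0 ttle Xm Xp Xi]
      have "(\<integral>\<omega>. (N (tt m c) \<omega> - N s \<omega>) * (N (tt m (Suc c)) \<omega> - N (tt m c) \<omega>) \<partial>M)
          = (\<integral>\<omega>. (N (tt m c) \<omega> - N s \<omega>) * J (tt m c) (tt m (Suc c)) \<omega> \<partial>M)" by (rule R(3))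
      also have "\<dots> \<le> (\<integral>\<omega>. (N (tt m c) \<omega> - N s \<omega>) * (lam_plus / real m) \<partial>M)"
      proof (rule integral_mono[OF R(2)])
        show "integrable M (\<lambda>\<omega>. (N (tt m c) \<omega> - N s \<omega>) * (lam_plus / real m))" using Xi by simp
        fix \<omega> assume w: "\<omega> \<in> space M"
        have "J (tt m c) (tt m (Suc c)) \<omega> \<le> lam_plus / real m"
          using J_bounds(4)[OF w s0 ttle] ttd[OF mp] by simp
        then show "(N (tt m c) \<omega> - N s \<omega>) * J (tt m c) (tt m (Suc c)) \<omega> \<le> (N (tt m c) \<omega> - N s \<omega>) * (lam_plus / real m)"
          using Xp[OF w] by (rule mult_left_mono)
      qed
      also have "\<dots> = (\<integral>\<omega>. N (tt m c) \<omega> - N s \<omega> \<partial>M) * (lam_plus / real m)" by simp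
      also have "\<dots> \<le> ((tt m c - s) * lam_plus) * (lam_plus / real m)"
        using incr_int[OF s ttge] lp1 mp by (intro mult_right_mono) auto
      also have "\<dots> \<le> lam_plus * (lam_plus / real m)"
      proof (rule mult_right_mono)
        show "(tt m c - s) * lam_plus \<le> lam_plus" using mult_right_mono[OF ttc[OF c], of lam_plus] lp1 by simp
        show "0 \<le> lam_plus / real m" using lp1 by simp
      qed
      finally show ?thesis using R(1) by (simp add: power2_eq_square)
    qed
    have "integrable M (U m)" unfolding U_def
      by (intro integrable_mult_right Bochner_Integration.integrable_sum) (use trm in blast)
    moreover have "(\<integral>\<omega>. U m \<omega> \<partial>M) = 2 * (\<Sum>c<m. (\<integral>\<omega>. (N (tt m c) \<omega> - N s \<omega>) * (N (tt m (Suc c)) \<omega> - N (tt m c) \<omega>) \<partial>M))"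
      unfolding U_def integral_mult_right_zero
      by (subst Bochner_Integration.integral_sum) (use trm in auto)
    moreover have "(\<Sum>c<m. (\<integral>\<omega>. (N (tt m c) \<omega> - N s \<omega>) * (N (tt m (Suc c)) \<omega> - N (tt m c) \<omega>) \<partial>M))
        \<le> (\<Sum>c<m. lam_plus^2 / real m)" using trm by (intro sum_mono) auto
    moreover have "(\<Sum>c<m. lam_plus^2 / real m) = lam_plus^2" using mp by simp
    ultimately show ?thesis by linarith
  qed
  have "(\<integral>\<^sup>+\<omega>. ennreal (kk \<omega>) \<partial>M) = (\<integral>\<^sup>+\<omega>. liminf (\<lambda>m. ennreal (U m \<omega>)) \<partial>M)"
  proof (rule nn_integral_cong)
    fix \<omega> assume w: "\<omega> \<in> space M"
    have "((\<lambda>m. ennreal (U m \<omega>)) \<longlongrightarrow> ennreal (kk \<omega>)) sequentially"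
      by (intro tendsto_eventually eventually_mono[OF ev[OF w]]) simp
    then show "ennreal (kk \<omega>) = liminf (\<lambda>m. ennreal (U m \<omega>))"
      by (rule lim_imp_Liminf[OF trivial_limit_sequentially, symmetric])
  qed
  also have "\<dots> \<le> liminf (\<lambda>m. \<integral>\<^sup>+\<omega>. ennreal (U m \<omega>) \<partial>M)"
    by (rule nn_integral_liminf) (use Um in simp)
  also have "\<dots> \<le> limsup (\<lambda>m. \<integral>\<^sup>+\<omega>. ennreal (U m \<omega>) \<partial>M)"
    by (rule Liminf_le_Limsup[OF trivial_limit_sequentially])
  also have "\<dots> \<le> ennreal (2 * lam_plus^2)"
  proof (intro Limsup_bounded eventually_sequentiallyI[of 1])
    fix m :: nat assume "1 \<le> m"
    then have mp: "m > 0" by simp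
    have "(\<integral>\<^sup>+\<omega>. ennreal (U m \<omega>) \<partial>M) = ennreal (\<integral>\<omega>. U m \<omega> \<partial>M)"
      using Ubd[OF mp] Unn by (intro nn_integral_eq_integral AE_I2) auto
    then show "(\<integral>\<^sup>+\<omega>. ennreal (U m \<omega>) \<partial>M) \<le> ennreal (2 * lam_plus^2)"
      using Ubd[OF mp] by (simp add: ennreal_leI)
  qed
  finally have kb: "(\<integral>\<^sup>+\<omega>. ennreal (kk \<omega>) \<partial>M) \<le> ennreal (2 * lam_plus^2)" .
  then have "(\<integral>\<^sup>+\<omega>. ennreal (kk \<omega>) \<partial>M) < \<infinity>" using ennreal_less_top[of "2*lam_plus^2"] unfolding infinity_ennreal_def by (rule le_less_trans)
  then have ki: "integrable M kk" by (rule integrableI_nonneg[rotated 2]) (use kknn in \<open>auto intro: AE_I2\<close>)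
  then show "integrable M (\<lambda>\<omega>. (N (s+1) \<omega> - N s \<omega>) * (N (s+1) \<omega> - N s \<omega> - 1))" unfolding kk_def .
  have "(\<integral>\<^sup>+\<omega>. ennreal (kk \<omega>) \<partial>M) = ennreal (\<integral>\<omega>. kk \<omega> \<partial>M)"
    by (rule nn_integral_eq_integral[OF ki]) (use kknn in \<open>auto intro: AE_I2\<close>)
  then have "ennreal (\<integral>\<omega>. kk \<omega> \<partial>M) \<le> ennreal (2 * lam_plus^2)" using kb by simp
  then have "(\<integral>\<omega>. kk \<omega> \<partial>M) \<le> 2 * lam_plus^2" by (subst (asm) ennreal_le_iff) auto
  then show "(\<integral>\<omega>. (N (s+1) \<omega> - N s \<omega>) * (N (s+1) \<omega> - N s \<omega> - 1) \<partial>M) \<le> 2 * lam_plus^2"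
    unfolding kk_def .
qed

end


lemma drift_pt:
  fixes lam :: "real \<Rightarrow> real"
  assumes k: "0 \<le> k" and lo: "lam (z - k) \<le> Jv" and hi: "Jv \<le> lam (z + 1)"
    and J0: "0 \<le> Jv" and Jp: "Jv \<le> lp"
    and z1: "\<forall>w\<ge>z1. 1 \<le> lam w" and z0: "z0 \<le> 0" "\<forall>w\<le>z0. lam w \<le> 1" and lp: "0 \<le> lp"
  shows "z * (1 - Jv) \<le> \<bar>z1\<bar> + (1 - z0) * lp + k"
proof -
  have R0: "0 \<le> (1 - z0) * lp" using z0 lp by simp
  show ?thesis
  proof (cases "0 \<le> z")
    case True
    show ?thesis
    proof (cases "z1 \<le> z - k")
      case True
      then have "1 \<le> Jv" using z1 lo by force
      then have "z * (1 - Jv) \<le> 0" using \<open>0 \<le> z\<close> by (simp add: mult_nonneg_nonpos)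
      then show ?thesis using R0 k by linarith
    next
      case False
      have "z * (1 - Jv) \<le> z * 1" using \<open>0 \<le> z\<close> J0 by (intro mult_left_mono) auto
      then show ?thesis using False R0 by linarith
    qed
  next
    case False
    show ?thesis
    proof (cases "z + 1 \<le> z0")
      case True
      then have "Jv \<le> 1" using z0 hi by force
      then have "z * (1 - Jv) \<le> 0" using False by (simp add: mult_nonpos_nonneg)
      then show ?thesis using R0 k by linarith
    next
      case F2: False
      have "z * (1 - Jv) = (- z) * (Jv - 1)" by (simp add: algebra_simps)
      also have "\<dots> \<le> (- z) * lp" using False Jp by (intro mult_left_mono) auto
      also have "\<dots> \<le> (1 - z0) * lp" using F2 lp by (intro mult_right_mono) auto
      finally show ?thesis using k by linarith
    qed
  qed
qed

context spc begin

lemma threshold1: "\<exists>z1. \<forall>w\<ge>z1. 1 \<le> lam w"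
proof -
  have "eventually (\<lambda>w. 1 < lam w) at_top" using ltop lp1 by (rule order_tendstoD)
  then obtain a where a: "\<forall>w\<ge>a. 1 < lam w" unfolding eventually_at_top_linorder by blast
  then show ?thesis by (intro exI[of _ a]) auto
qed

lemma threshold0: "\<exists>z0\<le>0. \<forall>w\<le>z0. lam w \<le> 1"
proof -
  have "eventually (\<lambda>w. lam w < 1) at_bot" using lbot lm1 by (rule order_tendstoD)
  then obtain b where b: "\<forall>w\<le>b. lam w < 1" unfolding eventually_at_bot_linorder by blast
  then show ?thesis by (intro exI[of _ "min b 0"]) auto
qed

lemma Nsq_int: "integrable M (\<lambda>\<omega>. (N (real j) \<omega>)^2)"
proof (induction j)
  case 0
  have "(\<lambda>\<omega>. (N (real 0) \<omega>)^2) = (\<lambda>\<omega>. N 0 \<omega> * N 0 \<omega>)" by (simp add: power2_eq_square)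
  moreover have "integrable M (\<lambda>\<omega>. N 0 \<omega> * N 0 \<omega>)"
    by (subst Bochner_Integration.integrable_cong[OF refl, where g="\<lambda>_. 0"]) (auto simp: pzero)
  ultimately show ?case by simp
next
  case (Suc j)
  define s where "s = real j"
  have s0: "0 \<le> s" unfolding s_def by simp
  have Xm: "N s \<in> borel_measurable (F s)" by (rule N_F)
  note R = real_ident[OF s0 _ Xm pnonneg N_int[OF s0], of "s+1", simplified]
  have "integrable M (\<lambda>\<omega>. N s \<omega>^2 + 2 * (N s \<omega> * (N (s+1) \<omega> - N s \<omega>))
      + (N (s+1) \<omega> - N s \<omega>) * (N (s+1) \<omega> - N s \<omega> - 1) + (N (s+1) \<omega> - N s \<omega>))"
    using Suc R(1) fact2(1)[OF s0] N_int s0 unfolding s_def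
    by (intro Bochner_Integration.integrable_add Bochner_Integration.integrable_diff integrable_mult_right) auto
  moreover have "(\<lambda>\<omega>. N s \<omega>^2 + 2 * (N s \<omega> * (N (s+1) \<omega> - N s \<omega>))
      + (N (s+1) \<omega> - N s \<omega>) * (N (s+1) \<omega> - N s \<omega> - 1) + (N (s+1) \<omega> - N s \<omega>)) = (\<lambda>\<omega>. (N (s+1) \<omega>)^2)"
    by (rule ext) (simp add: power2_eq_square algebra_simps)
  ultimately show ?case unfolding s_def by (simp add: add.commute)
qed

end

context spc begin

lemma V_int: "integrable M (\<lambda>\<omega>. (real j - N (real j) \<omega>)^2)"
proof -
  interpret prob_space M by (rule ps)
  have "integrable M (\<lambda>\<omega>. real j * real j - 2 * real j * N (real j) \<omega> + (N (real j) \<omega>)^2)"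
    using N_int[of "real j"] Nsq_int[of j]
    by (intro Bochner_Integration.integrable_add Bochner_Integration.integrable_diff integrable_mult_right) auto
  moreover have "(\<lambda>\<omega>. real j * real j - 2 * real j * N (real j) \<omega> + (N (real j) \<omega>)^2) = (\<lambda>\<omega>. (real j - N (real j) \<omega>)^2)"
    by (rule ext) (simp add: power2_eq_square algebra_simps)
  ultimately show ?thesis by simp
qed

lemma drift:
  assumes z1: "\<forall>w\<ge>z1. 1 \<le> lam w" and z0: "z0 \<le> 0" "\<forall>w\<le>z0. lam w \<le> 1"
  shows "(\<integral>\<omega>. (real (Suc j) - N (real (Suc j)) \<omega>)^2 \<partial>M)
     \<le> (\<integral>\<omega>. (real j - N (real j) \<omega>)^2 \<partial>M) + (2 * (\<bar>z1\<bar> + (1 - z0) * lam_plus) + 1 + lam_plus + 2 * lam_plus^2)"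
proof -
  interpret prob_space M by (rule ps)
  define s where "s = real j"
  have s0: "0 \<le> s" unfolding s_def by simp
  have sS: "real (Suc j) = s + 1" unfolding s_def by simp
  define B0 where "B0 = \<bar>z1\<bar> + (1 - z0) * lam_plus"
  define k where "k \<omega> = N (s+1) \<omega> - N s \<omega>" for \<omega>
  define JJ where "JJ = J s (s+1)"
  define z where "z \<omega> = s - N s \<omega>" for \<omega>
  define kk where "kk \<omega> = k \<omega> * (k \<omega> - 1)" for \<omega>
  have kint: "integrable M k" unfolding k_def using N_int s0 by auto
  have kkint: "integrable M kk" unfolding kk_def k_def by (rule fact2(1)[OF s0])
  have kkbd: "(\<integral>\<omega>. kk \<omega> \<partial>M) \<le> 2 * lam_plus^2" unfolding kk_def k_def by (rule fact2(2)[OF s0])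
  have Jint: "integrable M JJ" unfolding JJ_def using J_int s0 by simp
  note R = real_ident[OF s0 _ N_F pnonneg N_int[OF s0], of "s+1", simplified]
  have NkI: "integrable M (\<lambda>\<omega>. N s \<omega> * k \<omega>)" using R(1) unfolding k_def .
  have NJI: "integrable M (\<lambda>\<omega>. N s \<omega> * JJ \<omega>)" using R(2) unfolding JJ_def .
  have NkE: "(\<integral>\<omega>. N s \<omega> * k \<omega> \<partial>M) = (\<integral>\<omega>. N s \<omega> * JJ \<omega> \<partial>M)" using R(3) unfolding k_def JJ_def .
  have kE: "(\<integral>\<omega>. k \<omega> \<partial>M) = (\<integral>\<omega>. JJ \<omega> \<partial>M)"
    using real_ident(3)[OF s0 _ _ _ integrable_const[of 1], of "s+1"] unfolding k_def JJ_def by simp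
  have kbd: "(\<integral>\<omega>. k \<omega> \<partial>M) \<le> lam_plus" using incr_int[OF s0, of "s+1"] unfolding k_def by simp
  have zsq: "integrable M (\<lambda>\<omega>. (z \<omega>)^2)" using V_int[of j] unfolding z_def s_def .
  have zsq': "integrable M (\<lambda>\<omega>. (s + 1 - N (s+1) \<omega>)^2)" using V_int[of "Suc j"] unfolding sS .
  define D where "D \<omega> = 2 * (N s \<omega> * k \<omega> - N s \<omega> * JJ \<omega>) - 2 * s * (k \<omega> - JJ \<omega>)" for \<omega>
  define G where "G \<omega> = (z \<omega>)^2 + 2 * (z \<omega> * (1 - JJ \<omega>)) + 1 - k \<omega> + kk \<omega>" for \<omega>
  define H where "H \<omega> = (z \<omega>)^2 + (2 * B0 + 1) + k \<omega> + kk \<omega>" for \<omega>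
  have Dint: "integrable M D" unfolding D_def using NkI NJI kint Jint
    by (intro Bochner_Integration.integrable_diff integrable_mult_right) auto
  have DE: "(\<integral>\<omega>. D \<omega> \<partial>M) = 0"
  proof -
    have "(\<integral>\<omega>. D \<omega> \<partial>M) = 2 * ((\<integral>\<omega>. N s \<omega> * k \<omega> \<partial>M) - (\<integral>\<omega>. N s \<omega> * JJ \<omega> \<partial>M))
       - 2 * s * ((\<integral>\<omega>. k \<omega> \<partial>M) - (\<integral>\<omega>. JJ \<omega> \<partial>M))"
      unfolding D_def using NkI NJI kint Jint
      by (simp add: Bochner_Integration.integral_diff Bochner_Integration.integrable_diff)
    then show ?thesis using NkE kE by simp
  qed
  have GD: "G = (\<lambda>\<omega>. (s + 1 - N (s+1) \<omega>)^2 - D \<omega>)"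
    by (rule ext) (simp add: G_def D_def z_def k_def kk_def power2_eq_square algebra_simps)
  have Gint: "integrable M G" unfolding GD using zsq' Dint by auto
  have GE: "(\<integral>\<omega>. G \<omega> \<partial>M) = (\<integral>\<omega>. (s + 1 - N (s+1) \<omega>)^2 \<partial>M)"
    unfolding GD using zsq' Dint DE by (simp add: Bochner_Integration.integral_diff)
  have Hint: "integrable M H" unfolding H_def using zsq kint kkint
    by (intro Bochner_Integration.integrable_add) auto
  have HE: "(\<integral>\<omega>. H \<omega> \<partial>M) = (\<integral>\<omega>. (z \<omega>)^2 \<partial>M) + (2 * B0 + 1) + (\<integral>\<omega>. k \<omega> \<partial>M) + (\<integral>\<omega>. kk \<omega> \<partial>M)"
    unfolding H_def using zsq kint kkint
    by (simp add: Bochner_Integration.integral_add Bochner_Integration.integrable_add prob_space)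
  have GH: "G \<omega> \<le> H \<omega>" if w: "\<omega> \<in> space M" for \<omega>
  proof -
    have kn: "0 \<le> k \<omega>" unfolding k_def using pmonoD[OF w, of s "s+1"] by simp
    have b: "z \<omega> * (1 - JJ \<omega>) \<le> B0 + k \<omega>"
      unfolding B0_def
    proof (rule drift_pt[OF kn _ _ _ _ z1 z0 _])
      show "lam (z \<omega> - k \<omega>) \<le> JJ \<omega>" using J_bounds(1)[OF w s0, of "s+1"] unfolding z_def k_def JJ_def by simp
      show "JJ \<omega> \<le> lam (z \<omega> + 1)" using J_bounds(2)[OF w s0, of "s+1"] unfolding z_def JJ_def by (simp add: algebra_simps)
      show "0 \<le> JJ \<omega>" using J_bounds(3)[OF w s0, of "s+1"] unfolding JJ_def by simp
      show "JJ \<omega> \<le> lam_plus" using J_bounds(4)[OF w s0, of "s+1"] unfolding JJ_def by simp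
      show "0 \<le> lam_plus" using lp1 by simp
    qed
    then show ?thesis unfolding G_def H_def by linarith
  qed
  have "(\<integral>\<omega>. (s + 1 - N (s+1) \<omega>)^2 \<partial>M) = (\<integral>\<omega>. G \<omega> \<partial>M)" using GE by simp
  also have "\<dots> \<le> (\<integral>\<omega>. H \<omega> \<partial>M)" using Gint Hint GH by (rule integral_mono)
  also have "\<dots> \<le> (\<integral>\<omega>. (z \<omega>)^2 \<partial>M) + (2 * B0 + 1) + lam_plus + 2 * lam_plus^2"
    unfolding HE using kbd kkbd by linarith
  finally show ?thesis unfolding sS z_def B0_def s_def by simp
qed

end

context spc begin

lemma mean_bound:
  obtains C where "0 \<le> C" "\<And>n::nat. \<bar>real n - (\<integral>\<omega>. N (real n) \<omega> \<partial>M)\<bar> \<le> sqrt (C * real n)"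
proof -
  interpret prob_space M by (rule ps)
  obtain z1 where z1: "\<forall>w\<ge>z1. 1 \<le> lam w" using threshold1 by blast
  obtain z0 where z0: "z0 \<le> 0" "\<forall>w\<le>z0. lam w \<le> 1" using threshold0 by blast
  define C where "C = 2 * (\<bar>z1\<bar> + (1 - z0) * lam_plus) + 1 + lam_plus + 2 * lam_plus^2"
  have C0: "0 \<le> C" unfolding C_def using z0 lp1 by simp
  have V: "(\<integral>\<omega>. (real n - N (real n) \<omega>)^2 \<partial>M) \<le> C * real n" for n
  proof (induction n)
    case 0
    have "(\<integral>\<omega>. (real 0 - N (real 0) \<omega>)^2 \<partial>M) = (\<integral>\<omega>. 0 \<partial>M)"
      by (intro Bochner_Integration.integral_cong) (auto simp: pzero)
    then show ?case by simp
  next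
    case (Suc n)
    have "(\<integral>\<omega>. (real (Suc n) - N (real (Suc n)) \<omega>)^2 \<partial>M) \<le> (\<integral>\<omega>. (real n - N (real n) \<omega>)^2 \<partial>M) + C"
      unfolding C_def by (rule drift[OF z1 z0])
    then show ?case using Suc by (simp add: algebra_simps)
  qed
  have "\<bar>real n - (\<integral>\<omega>. N (real n) \<omega> \<partial>M)\<bar> \<le> sqrt (C * real n)" for n
  proof -
    define Y where "Y \<omega> = real n - N (real n) \<omega>" for \<omega>
    have Yi: "integrable M Y" unfolding Y_def using N_int[of "real n"] by auto
    have Y2: "integrable M (\<lambda>\<omega>. (Y \<omega>)^2)" unfolding Y_def by (rule V_int)
    have EY: "(\<integral>\<omega>. Y \<omega> \<partial>M) = real n - (\<integral>\<omega>. N (real n) \<omega> \<partial>M)"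
      unfolding Y_def using N_int[of "real n"] by (simp add: prob_space)
    have "(\<integral>\<omega>. Y \<omega> \<partial>M)^2 \<le> (\<integral>\<omega>. (Y \<omega>)^2 \<partial>M)"
      using variance_eq[OF Yi Y2] variance_positive[of Y] by simp
    also have "\<dots> \<le> C * real n" using V[of n] unfolding Y_def .
    finally have "(\<integral>\<omega>. Y \<omega> \<partial>M)^2 \<le> C * real n" .
    then have "sqrt ((\<integral>\<omega>. Y \<omega> \<partial>M)^2) \<le> sqrt (C * real n)" by (rule real_sqrt_le_mono)
    then show ?thesis unfolding EY by simp
  qed
  then show ?thesis using that C0 by blast
qed

lemma EN_mono: "s \<le> t \<Longrightarrow> 0 \<le> s \<Longrightarrow> (\<integral>\<omega>. N s \<omega> \<partial>M) \<le> (\<integral>\<omega>. N t \<omega> \<partial>M)"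
  using N_int pmonoD by (intro integral_mono) auto

lemma main: "((\<lambda>t. (\<integral>\<omega>. N t \<omega> \<partial>M) / t) \<longlongrightarrow> 1) at_top"
proof -
  obtain C where C0: "0 \<le> C" and C: "\<And>n::nat. \<bar>real n - (\<integral>\<omega>. N (real n) \<omega> \<partial>M)\<bar> \<le> sqrt (C * real n)"
    using mean_bound by blast
  define K where "K = sqrt (2 * C)"
  have bnd: "\<bar>(\<integral>\<omega>. N t \<omega> \<partial>M) / t - 1\<bar> \<le> 1 / t + K * (1 / sqrt t)" if t: "1 \<le> t" for t
  proof -
    define n where "n = nat \<lfloor>t\<rfloor>"
    have fl: "0 \<le> \<lfloor>t\<rfloor>" using t by simp
    have rn: "real n = of_int \<lfloor>t\<rfloor>" unfolding n_def using fl by simp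
    have nt1: "real n \<le> t" unfolding rn by (rule of_int_floor_le)
    have nt2: "t < real n + 1" unfolding rn by (rule real_of_int_floor_add_one_gt)
    note nt = nt1 nt2
    have lo: "(\<integral>\<omega>. N (real n) \<omega> \<partial>M) \<le> (\<integral>\<omega>. N t \<omega> \<partial>M)"
      by (rule EN_mono[OF nt1 of_nat_0_le_iff])
    have t2: "t \<le> real (Suc n)" using nt2 by simp
    have hi: "(\<integral>\<omega>. N t \<omega> \<partial>M) \<le> (\<integral>\<omega>. N (real (Suc n)) \<omega> \<partial>M)"
      using t by (intro EN_mono[OF t2]) simp
    have Ct: "0 \<le> C * t" using C0 t by simp
    have "C * real n \<le> C * t" using nt C0 by (intro mult_left_mono) auto
    then have sq1: "sqrt (C * real n) \<le> sqrt (2 * C * t)"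
      using Ct by (intro real_sqrt_le_mono) linarith
    have "C * real (Suc n) \<le> C * (2 * t)" using nt t C0 by (intro mult_left_mono) auto
    then have sq2: "sqrt (C * real (Suc n)) \<le> sqrt (2 * C * t)"
      by (intro real_sqrt_le_mono) (simp add: algebra_simps)
    have "\<bar>(\<integral>\<omega>. N t \<omega> \<partial>M) - t\<bar> \<le> 1 + sqrt (2 * C * t)"
    proof (rule abs_leI)
      have s: "real (Suc n) = real n + 1" by simp
      show "(\<integral>\<omega>. N t \<omega> \<partial>M) - t \<le> 1 + sqrt (2 * C * t)"
        using abs_le_D2[OF C[of "Suc n"]] hi nt sq2 s by linarith
      show "- ((\<integral>\<omega>. N t \<omega> \<partial>M) - t) \<le> 1 + sqrt (2 * C * t)"
        using abs_le_D1[OF C[of n]] lo nt sq1 by linarith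
    qed
    moreover have "sqrt (2 * C * t) = K * sqrt t" unfolding K_def by (simp add: real_sqrt_mult)
    ultimately have a: "\<bar>(\<integral>\<omega>. N t \<omega> \<partial>M) - t\<bar> \<le> 1 + K * sqrt t" by simp
    have "(\<integral>\<omega>. N t \<omega> \<partial>M) / t - 1 = ((\<integral>\<omega>. N t \<omega> \<partial>M) - t) / t"
      using t by (simp add: diff_divide_distrib)
    then have "\<bar>(\<integral>\<omega>. N t \<omega> \<partial>M) / t - 1\<bar> = \<bar>(\<integral>\<omega>. N t \<omega> \<partial>M) - t\<bar> / t"
      using t by (simp add: abs_divide)
    also have "\<dots> \<le> (1 + K * sqrt t) / t" using t by (intro divide_right_mono[OF a]) simp
    also have "\<dots> = 1 / t + K * (1 / sqrt t)"
    proof -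
      have sp: "0 < sqrt t" using t by simp
      have tt: "t = sqrt t * sqrt t" using t by (simp add: real_sqrt_mult_self)
      have "(1 + K * sqrt t) / t = 1 / t + K * (sqrt t / t)" by (simp add: add_divide_distrib)
      also have "sqrt t / t = 1 / sqrt t" using sp by (subst tt) (simp add: divide_simps)
      finally show ?thesis by simp
    qed
    finally show ?thesis .
  qed
  have lim0: "((\<lambda>t::real. 1 / t + K * (1 / sqrt t)) \<longlongrightarrow> 0) at_top"
  proof -
    have "((\<lambda>t::real. 1 / t) \<longlongrightarrow> 0) at_top"
      by (rule tendsto_divide_0[OF tendsto_const filterlim_at_top_imp_at_infinity[OF filterlim_ident]])
    moreover have "((\<lambda>t::real. 1 / sqrt t) \<longlongrightarrow> 0) at_top"
      by (rule tendsto_divide_0[OF tendsto_const filterlim_at_top_imp_at_infinity[OF sqrt_at_top]])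
    ultimately show ?thesis using tendsto_add_zero tendsto_mult_right_zero by blast
  qed
  have "((\<lambda>t. (\<integral>\<omega>. N t \<omega> \<partial>M) / t - 1) \<longlongrightarrow> 0) at_top"
  proof (rule Lim_null_comparison[OF _ lim0])
    show "\<forall>\<^sub>F t in at_top. norm ((\<integral>\<omega>. N t \<omega> \<partial>M) / t - 1) \<le> 1 / t + K * (1 / sqrt t)"
      using bnd by (auto simp: eventually_at_top_linorder intro!: exI[of _ 1])
  qed
  then show ?thesis by (simp add: LIM_zero_iff)
qed

end

theorem lemma6:
  fixes M :: "'a measure" and F :: "real \<Rightarrow> 'a measure"
    and N :: "real \<Rightarrow> 'a \<Rightarrow> real" and lam :: "real \<Rightarrow> real"
    and lam_minus lam_plus :: real
  assumes "prob_space M"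
    and "filtration_of M F"
    and "\<forall>\<omega>\<in>space M. simple_counting_path (\<lambda>t. N t \<omega>)"
    and "\<forall>t. N t \<in> borel_measurable (F t)"
    and "continuous_on UNIV lam" and "mono lam"
    and "(lam \<longlongrightarrow> lam_minus) at_bot" and "(lam \<longlongrightarrow> lam_plus) at_top"
    and "0 < lam_minus" and "lam_minus < 1" and "1 < lam_plus"
    and "martingale_on M F
           (\<lambda>t \<omega>. N t \<omega> - integral {0..t} (\<lambda>s. lam (s - left_lim (\<lambda>u. N u \<omega>) s)))"
  shows "((\<lambda>t. (\<integral>\<omega>. N t \<omega> \<partial>M) / t) \<longlongrightarrow> 1) at_top"
proof -
  interpret spc M F N lam lam_minus lam_plus
    by (rule spc.intro[OF assms])
  show ?thesis by (rule main)
qed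

end
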